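(* Let $(P_n)_{n\ge0}$ be defined by $P_0(m)=m$ and $P_{n+1}(m)=P_n(m+1)+\sum_{i=0}^{n}P_i(m)P_{n-i}(m)$, write $P_n(m)=\sum_{i=1}^{n+2}p^{(i)}_n m^{n+2-i}$ (with $p^{(i)}_n=0$ for $i>n+2$), and let $a_i(z)=\sum_{n\ge0}p^{(i)}_n z^n$. Then for every $i\ge 2$, \[a_i(z)\ \sim\ \frac{C_{i-2}}{2^{3i-5}(1-4z)^{(2i-3)/2}}\qquad\text{as } z\to \tfrac14,\] where $C_k=\frac{1}{k+1}\binom{2k}{k}$ is the $k$-th Catalan number.
   Context: $f(z)\sim g(z)$ as $z\to z_0$ means $f(z)/g(z)\to 1$ as $z\to z_0$; here $z\to 1/4$ within the disc $|z|<1/4$ where the $a_i$ converge. *)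

theory Defs
  imports "HOL-Analysis.Analysis" "HOL-Computational_Algebra.Polynomial"
begin

fun Ppoly :: "nat \<Rightarrow> int poly" where
  "Ppoly 0 = [:0, 1:]"
| "Ppoly (Suc n) = pcompose (Ppoly n) [:1, 1:]
     + (\<Sum>i\<le>n. Ppoly i * Ppoly (n - i))"

definition pcoef :: "nat \<Rightarrow> nat \<Rightarrow> int" where
  "pcoef i n = (if 1 \<le> i \<and> i \<le> n + 2 then coeff (Ppoly n) (n + 2 - i) else 0)"

definition agen :: "nat \<Rightarrow> complex \<Rightarrow> complex" where
  "agen i z = (\<Sum>n. of_int (pcoef i n) * z ^ n)"

definition catalan :: "nat \<Rightarrow> real" where
  "catalan k = real ((2 * k) choose k) / real (k + 1)"

end

theory Submission
  imports Defs "HOL-Complex_Analysis.Complex_Analysis"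
begin

lemma degree_Ppoly: "degree (Ppoly n) \<le> n + 1"
proof (induction n rule: less_induct)
  case (less n)
  show ?case
  proof (cases n)
    case 0 then show ?thesis by simp
  next
    case (Suc m)
    have h1: "degree (pcompose (Ppoly m) [:1, 1:]) \<le> m + 1"
      using degree_pcompose_le[of "Ppoly m" "[:1,1:]"] less[of m] Suc by simp
    have h2: "degree (\<Sum>i\<le>m. Ppoly i * Ppoly (m - i)) \<le> m + 2"
    proof (rule degree_sum_le)
      fix i assume "i \<in> {..m}"
      then have "degree (Ppoly i) \<le> i + 1" "degree (Ppoly (m - i)) \<le> m - i + 1"
        using less Suc by auto
      then show "degree (Ppoly i * Ppoly (m - i)) \<le> m + 2"
        using degree_mult_le[of "Ppoly i" "Ppoly (m-i)"] \<open>i \<in> {..m}\<close> by auto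
    qed simp
    show ?thesis using Suc h1 h2 degree_add_le[of "pcompose (Ppoly m) [:1, 1:]" "m+2"] by auto
  qed
qed

lemma coeff_Ppoly_high: "d > n + 1 \<Longrightarrow> coeff (Ppoly n) d = 0"
  using degree_Ppoly[of n] by (intro coeff_eq_0) auto

lemma pcompose_X_power: "pcompose ([:0, 1:] ^ n) q = q ^ n"
  by (induction n) (simp_all only: power_0 power_Suc pcompose_1 pcompose_mult, simp_all add: pcompose_pCons)

lemma coeff_pcompose_shift:
  fixes p :: "int poly"
  assumes "degree p \<le> N"
  shows "coeff (pcompose p [:1, 1:]) d = (\<Sum>t\<le>N. coeff p t * int (t choose d))"
proof -
  have "pcompose p [:1,1:] = (\<Sum>t\<le>N. pcompose (monom (coeff p t) t) [:1,1:])"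
    using poly_as_sum_of_monoms'[OF assms] pcompose_sum by metis
  also have "\<dots> = (\<Sum>t\<le>N. smult (coeff p t) ([:1,1:] ^ t))"
    by (simp add: monom_altdef pcompose_smult pcompose_X_power)
  finally have "coeff (pcompose p [:1,1:]) d = (\<Sum>t\<le>N. coeff p t * coeff ([:1,1:] ^ t) d)"
    by (simp add: coeff_sum)
  also have "\<dots> = (\<Sum>t\<le>N. coeff p t * int (t choose d))"
  proof (intro sum.cong refl)
    fix t
    show "coeff p t * coeff ([:1,1:] ^ t) d = coeff p t * int (t choose d)"
    proof (cases "d \<le> t")
      case True then show ?thesis by (simp add: coeff_linear_poly_power)
    next
      case False
      have "degree ([:1::int,1:] ^ t) \<le> t"
        using degree_power_le[of "[:1::int,1:]" t] by simp
      then have "coeff ([:1::int,1:] ^ t) d = 0" using False by (intro coeff_eq_0) auto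
      then show ?thesis using False by simp
    qed
  qed
  finally show ?thesis .
qed

lemma pcoef_0: "pcoef i 0 = (if i = 1 then 1 else 0)"
  by (auto simp: pcoef_def)

lemma coeff_Ppoly_nz: "coeff (Ppoly n) d \<noteq> 0 \<Longrightarrow> d \<le> n + 1"
  using coeff_Ppoly_high[of n d] by linarith

lemma pcoef_nz: "pcoef a j \<noteq> 0 \<Longrightarrow> 1 \<le> a \<and> a \<le> j + 2"
  by (auto simp: pcoef_def split: if_splits)

lemma pcoef_eq: "1 \<le> a \<Longrightarrow> a \<le> j + 2 \<Longrightarrow> pcoef a j = coeff (Ppoly j) (j + 2 - a)"
  by (simp add: pcoef_def)

lemma part1:
  assumes "1 \<le> i" "i \<le> n + 3"
  shows "(\<Sum>t\<le>n+1. coeff (Ppoly n) t * int (t choose (n + 3 - i)))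
       = (\<Sum>k\<in>{1..<i}. int ((n+2-k) choose (i-1-k)) * pcoef k n)"
proof -
  have "(\<Sum>t\<le>n+1. coeff (Ppoly n) t * int (t choose (n + 3 - i)))
      = (\<Sum>t\<in>{n+3-i..n+1}. coeff (Ppoly n) t * int (t choose (n + 3 - i)))"
    by (rule sum.mono_neutral_right) auto
  also have "\<dots> = (\<Sum>k\<in>{1..<i}. int ((n+2-k) choose (i-1-k)) * pcoef k n)"
  proof (rule sum.reindex_bij_witness[where i = "\<lambda>k. n + 2 - k" and j = "\<lambda>t. n + 2 - t"])
    fix t assume t: "t \<in> {n+3-i..n+1}"
    have "pcoef (n + 2 - t) n = coeff (Ppoly n) t" using t assms by (subst pcoef_eq) auto
    moreover have "t choose (i - 1 - (n + 2 - t)) = t choose (n + 3 - i)"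
      using t assms by (subst binomial_symmetric) (auto intro: arg_cong2[where f = "(choose)"])
    ultimately show "int ((n + 2 - (n + 2 - t)) choose (i - 1 - (n + 2 - t))) * pcoef (n + 2 - t) n =
       coeff (Ppoly n) t * int (t choose (n + 3 - i))" using t by simp
  qed (use assms in auto)
  finally show ?thesis .
qed

lemma part2:
  assumes "1 \<le> i" "i \<le> n + 3" "j \<le> n"
  shows "coeff (Ppoly j * Ppoly (n - j)) (n + 3 - i)
       = (\<Sum>a\<in>{1..i}. pcoef a j * pcoef (i + 1 - a) (n - j))"
proof -
  define d where "d = n + 3 - i"
  define U where "U = {u. u \<le> d \<and> u \<le> j + 1 \<and> d - u \<le> n - j + 1}"
  define A where "A = {a\<in>{1..i}. a \<le> j + 2 \<and> i + 1 - a \<le> n - j + 2}"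
  have "coeff (Ppoly j * Ppoly (n - j)) d = (\<Sum>u\<le>d. coeff (Ppoly j) u * coeff (Ppoly (n - j)) (d - u))"
    by (simp add: coeff_mult)
  also have "\<dots> = (\<Sum>u\<in>U. coeff (Ppoly j) u * coeff (Ppoly (n - j)) (d - u))"
    by (rule sum.mono_neutral_right) (auto simp: U_def dest!: coeff_Ppoly_nz)
  also have "\<dots> = (\<Sum>a\<in>A. pcoef a j * pcoef (i + 1 - a) (n - j))"
  proof (rule sum.reindex_bij_witness[where i = "\<lambda>a. j + 2 - a" and j = "\<lambda>u. j + 2 - u"])
    fix u assume u: "u \<in> U"
    have "pcoef (j + 2 - u) j = coeff (Ppoly j) u"
      using u assms by (subst pcoef_eq) (auto simp: U_def)
    moreover have "pcoef (i + 1 - (j + 2 - u)) (n - j) = coeff (Ppoly (n - j)) (d - u)"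
      using u assms by (subst pcoef_eq) (auto simp: U_def d_def intro!: arg_cong[where f = "coeff _"])
    ultimately show "pcoef (j + 2 - u) j * pcoef (i + 1 - (j + 2 - u)) (n - j) =
         coeff (Ppoly j) u * coeff (Ppoly (n - j)) (d - u)" by simp
  qed (use assms in \<open>auto simp: A_def U_def d_def\<close>)
  also have "\<dots> = (\<Sum>a\<in>{1..i}. pcoef a j * pcoef (i + 1 - a) (n - j))"
    by (rule sum.mono_neutral_left) (auto simp: A_def dest: pcoef_nz)
  finally show ?thesis by (simp add: d_def)
qed

lemma binom_part_zero:
  assumes "n + 3 < i"
  shows "(\<Sum>k\<in>{1..<i}. int ((n+2-k) choose (i-1-k)) * pcoef k n) = 0"
proof (rule sum.neutral, rule ballI)
  fix k assume "k \<in> {1..<i}"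
  show "int ((n+2-k) choose (i-1-k)) * pcoef k n = 0"
  proof (cases "pcoef k n = 0")
    case False then have "k \<le> n + 2" using pcoef_nz by blast
    then have "(n+2-k) choose (i-1-k) = 0" using assms by (intro binomial_eq_0) auto
    then show ?thesis by simp
  qed simp
qed

lemma pcoef_Suc:
  assumes "1 \<le> i"
  shows "pcoef i (Suc n) = (\<Sum>k\<in>{1..<i}. int ((n+2-k) choose (i-1-k)) * pcoef k n)
           + (\<Sum>a\<in>{1..i}. \<Sum>j\<le>n. pcoef a j * pcoef (i + 1 - a) (n - j))"
proof (cases "i \<le> n + 3")
  case True
  have "pcoef i (Suc n) = coeff (Ppoly (Suc n)) (n + 3 - i)"
    using True assms by (simp add: pcoef_def eval_nat_numeral del: Ppoly.simps)
  also have "\<dots> = coeff (pcompose (Ppoly n) [:1, 1:]) (n + 3 - i)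
       + (\<Sum>j\<le>n. coeff (Ppoly j * Ppoly (n - j)) (n + 3 - i))"
    by (subst Ppoly.simps) (simp only: coeff_add coeff_sum)
  also have "coeff (pcompose (Ppoly n) [:1, 1:]) (n + 3 - i) = (\<Sum>k\<in>{1..<i}. int ((n+2-k) choose (i-1-k)) * pcoef k n)"
    using coeff_pcompose_shift[OF degree_Ppoly[of n]] part1[OF assms True] by simp
  also have "(\<Sum>j\<le>n. coeff (Ppoly j * Ppoly (n - j)) (n + 3 - i))
      = (\<Sum>j\<le>n. \<Sum>a\<in>{1..i}. pcoef a j * pcoef (i + 1 - a) (n - j))"
    using part2[OF assms True] by (intro sum.cong) auto
  also have "\<dots> = (\<Sum>a\<in>{1..i}. \<Sum>j\<le>n. pcoef a j * pcoef (i + 1 - a) (n - j))"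
    by (rule sum.swap)
  finally show ?thesis .
next
  case False
  have l: "pcoef i (Suc n) = 0" using False by (simp add: pcoef_def)
  have r1: "(\<Sum>k\<in>{1..<i}. int ((n+2-k) choose (i-1-k)) * pcoef k n) = 0"
    using False by (intro binom_part_zero) simp
  have r2: "(\<Sum>a\<in>{1..i}. \<Sum>j\<le>n. pcoef a j * pcoef (i + 1 - a) (n - j)) = 0"
  proof (intro sum.neutral ballI)
    fix a j assume "a \<in> {1..i}" "j \<in> {..n}"
    show "pcoef a j * pcoef (i + 1 - a) (n - j) = 0"
    proof (rule ccontr)
      assume "pcoef a j * pcoef (i + 1 - a) (n - j) \<noteq> 0"
      then have "a \<le> j + 2" "i + 1 - a \<le> n - j + 2" using pcoef_nz by (auto simp del: mult_eq_0_iff simp: mult_eq_0_iff)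
      then show False using \<open>\<not> i \<le> n + 3\<close> \<open>j \<in> {..n}\<close> \<open>a \<in> {1..i}\<close> by auto
    qed
  qed
  show ?thesis using l r1 r2 by simp
qed


definition F :: "nat \<Rightarrow> complex fps" where
  "F k = Abs_fps (\<lambda>n. of_int (pcoef k n))"

definition G :: "nat \<Rightarrow> complex fps" where
  "G k = Abs_fps (\<lambda>m. if 2 \<le> m + k then of_int (pcoef k (m + k - 2)) else 0)"

lemma F_nth [simp]: "F k $ n = of_int (pcoef k n)" by (simp add: F_def)
lemma G_nth: "G k $ m = (if 2 \<le> m + k then of_int (pcoef k (m + k - 2)) else 0)" by (simp add: G_def)

lemma agen_eval: "agen k z = eval_fps (F k) z"
  by (simp add: agen_def eval_fps_def)

lemma F1_eq: "F 1 = 1 + fps_X * F 1 ^ 2"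
proof (rule fps_ext)
  fix n show "F 1 $ n = (1 + fps_X * F 1 ^ 2) $ n"
  proof (cases n)
    case 0 then show ?thesis by (simp add: pcoef_0)
  next
    case (Suc m)
    have "pcoef 1 (Suc m) = (\<Sum>j\<le>m. pcoef 1 j * pcoef 1 (m - j))"
      using pcoef_Suc[of 1 m] by simp
    moreover have "(fps_X * F 1 ^ 2) $ Suc m = (F 1 * F 1) $ m"
      by (simp only: fps_X_mult_nth power2_eq_square) simp
    ultimately show ?thesis using Suc
      by (simp add: fps_mult_nth atLeast0AtMost)
  qed
qed

lemma F_G: "k \<ge> 2 \<Longrightarrow> F k = fps_X ^ (k - 2) * G k"
  by (rule fps_ext) (auto simp: fps_X_power_mult_nth G_nth pcoef_def)

lemma G1: "G 1 = fps_X * F 1"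
  by (rule fps_ext) (auto simp: fps_X_mult_nth G_nth)

lemma higher_deriv_nth: "(fps_deriv ^^ r) f $ m = pochhammer (of_nat m + 1) r * f $ (m + r)"
proof (induction r arbitrary: m)
  case 0 then show ?case by simp
next
  case (Suc r)
  have "(fps_deriv ^^ Suc r) f $ m = of_nat (m + 1) * ((fps_deriv ^^ r) f $ (m + 1))"
    by (simp add: fps_deriv_nth)
  also have "\<dots> = pochhammer (of_nat m + 1) (Suc r) * f $ (m + Suc r)"
    using Suc by (simp add: pochhammer_rec add_ac mult.assoc)
  finally show ?case .
qed

lemma higher_deriv_nth_choose:
  fixes f :: "complex fps"
  shows "(fps_deriv ^^ r) f $ m / fact r = of_nat ((m + r) choose r) * f $ (m + r)"
proof -
  have "pochhammer (of_nat m + 1 :: complex) r / fact r = of_nat ((m + r) choose r)"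
    using gbinomial_pochhammer'[of "of_nat (m + r) :: complex" r]
    by (simp add: binomial_gbinomial)
  moreover have "(fps_deriv ^^ r) f $ m / fact r = (pochhammer (of_nat m + 1 :: complex) r / fact r) * f $ (m + r)"
    by (simp add: higher_deriv_nth times_divide_eq_left)
  ultimately show ?thesis by simp
qed

definition Bsum :: "nat \<Rightarrow> complex fps" where
  "Bsum i = (\<Sum>k\<in>{1..<i}. fps_const (1 / fact (i - 1 - k)) * (fps_deriv ^^ (i - 1 - k)) (G k))"

lemma Bsum_nth:
  assumes "i \<le> n + 3"
  shows "Bsum i $ (n + 3 - i) = (\<Sum>k\<in>{1..<i}. of_int (int ((n + 2 - k) choose (i - 1 - k)) * pcoef k n))"
  unfolding Bsum_def fps_sum_nth
proof (intro sum.cong refl)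
  fix k assume k: "k \<in> {1..<i}"
  have e: "n + 3 - i + (i - 1 - k) = n + 2 - k" using k assms by auto
  have "(fps_const (1 / fact (i - 1 - k)) * (fps_deriv ^^ (i - 1 - k)) (G k)) $ (n + 3 - i)
      = (fps_deriv ^^ (i - 1 - k)) (G k) $ (n + 3 - i) / fact (i - 1 - k)"
    by simp
  also have "\<dots> = of_nat ((n + 2 - k) choose (i - 1 - k)) * G k $ (n + 2 - k)"
    by (subst higher_deriv_nth_choose) (simp only: e)
  also have "G k $ (n + 2 - k) = of_int (pcoef k n)"
    using k assms by (simp add: G_nth)
  finally show "(fps_const (1 / fact (i - 1 - k)) * (fps_deriv ^^ (i - 1 - k)) (G k)) $ (n + 3 - i) =
         of_int (int ((n + 2 - k) choose (i - 1 - k)) * pcoef k n)" by simp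
qed

lemma F_rec:
  assumes "i \<ge> 2"
  shows "F i = fps_X ^ (i - 2) * Bsum i + fps_X * (\<Sum>a\<in>{1..i}. F a * F (i + 1 - a))"
proof (rule fps_ext)
  fix n show "F i $ n = (fps_X ^ (i - 2) * Bsum i + fps_X * (\<Sum>a\<in>{1..i}. F a * F (i + 1 - a))) $ n"
  proof (cases n)
    case 0
    have "(fps_X ^ (i - 2) * Bsum i) $ 0 = 0"
    proof (cases "i = 2")
      case True
      then show ?thesis by (simp add: Bsum_def G_nth fps_sum_nth)
    qed (use assms in \<open>simp add: fps_X_power_mult_nth\<close>)
    then show ?thesis using 0 assms by (simp add: pcoef_0 fps_X_mult_nth)
  next
    case (Suc m)
    have e1: "(fps_X ^ (i - 2) * Bsum i) $ Suc m = of_int (\<Sum>k\<in>{1..<i}. int ((m+2-k) choose (i-1-k)) * pcoef k m)"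
    proof (cases "i \<le> m + 3")
      case True
      then have "Suc m - (i - 2) = m + 3 - i" using assms by auto
      then show ?thesis using True assms by (simp add: fps_X_power_mult_nth Bsum_nth)
    next
      case False
      then show ?thesis using binom_part_zero[of m i] by (simp add: fps_X_power_mult_nth)
    qed
    have e2: "(fps_X * (\<Sum>a\<in>{1..i}. F a * F (i + 1 - a))) $ Suc m
        = of_int (\<Sum>a\<in>{1..i}. \<Sum>j\<le>m. pcoef a j * pcoef (i + 1 - a) (m - j))"
      by (simp only: fps_X_mult_nth) (simp add: fps_sum_nth fps_mult_nth atLeast0AtMost)
    show ?thesis using Suc e1 e2 pcoef_Suc[of i m] assms by simp
  qed
qed


definition sq :: "complex \<Rightarrow> complex" where "sq z = csqrt (1 - 4 * z)"

lemma notin_nonpos: "norm (z::complex) < 1/4 \<Longrightarrow> 1 - 4 * z \<notin> \<real>\<^sub>\<le>\<^sub>0"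
proof -
  assume "norm z < 1/4"
  then have "Re z < 1/4" using complex_Re_le_cmod[of z] by linarith
  then have "Re (1 - 4 * z) > 0" by simp
  then show ?thesis by (auto simp: complex_nonpos_Reals_iff)
qed

lemma sq_nz: "norm (z::complex) < 1/4 \<Longrightarrow> sq z \<noteq> 0"
  using notin_nonpos[of z] by (auto simp: sq_def)

lemma sq_holo: "sq holomorphic_on ball 0 (1/4)"
  unfolding sq_def by (intro holomorphic_intros) (metis mem_ball_0 notin_nonpos)

definition S :: "complex fps" where "S = fps_expansion sq 0"

lemma S_radius: "ereal (1/4) \<le> fps_conv_radius S"
  using conv_radius_fps_expansion[of sq 0 "ereal (1/4)"] sq_holo by (simp add: S_def)

lemma S_eval: "norm z < 1/4 \<Longrightarrow> eval_fps S z = sq z"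
  using eval_fps_expansion'[of sq 0 "ereal (1/4)"] sq_holo by (simp add: S_def)

lemma ok_radius: "ereal (1/4) \<le> fps_conv_radius f \<Longrightarrow> norm (z::complex) < 1/4 \<Longrightarrow> norm z < fps_conv_radius f"
  using less_le_trans[of "ereal (norm z)" "ereal (1/4)" "fps_conv_radius f"] by simp

lemma S_sq: "S * S = 1 - 4 * fps_X"
proof (rule eval_fps_eqD)
  have "fps_conv_radius (S * S) \<ge> ereal (1/4)"
    using fps_conv_radius_mult[of S S] S_radius by simp
  then show "fps_conv_radius (S * S) > 0"
    using less_le_trans[of 0 "ereal (1/4)" "fps_conv_radius (S * S)"] by simp
  have "fps_conv_radius (4 * fps_X :: complex fps) = \<infinity>"
    by (simp add: numeral_fps_const fps_conv_radius_cmult_left)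
  then show "fps_conv_radius (1 - 4 * fps_X :: complex fps) > 0"
    using fps_conv_radius_diff[of 1 "4 * fps_X :: complex fps"] by simp
  have "eventually (\<lambda>z::complex. z \<in> ball 0 (1/4)) (nhds 0)"
    by (intro eventually_nhds_in_open) auto
  then show "eventually (\<lambda>z. eval_fps (S * S) z = eval_fps (1 - 4 * fps_X) z) (nhds 0)"
  proof eventually_elim
    case (elim z)
    then have z: "norm z < 1/4" by simp
    have "eval_fps (S * S) z = sq z * sq z"
      by (subst eval_fps_mult) (simp_all add: ok_radius[OF S_radius z] S_eval[OF z])
    also have "\<dots> = 1 - 4 * z" unfolding sq_def power2_eq_square[symmetric] by simp
    also have "\<dots> = eval_fps (1 - 4 * fps_X) z"
      by (subst eval_fps_diff) (simp_all add: numeral_fps_const fps_conv_radius_cmult_left eval_fps_mult)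
    finally show ?case .
  qed
qed

lemma S_0: "S $ 0 = 1"
proof -
  have "S $ 0 = eval_fps S 0" by (simp only: eval_fps_at_0)
  also have "\<dots> = sq 0" by (rule S_eval) simp
  finally show ?thesis by (simp add: sq_def)
qed

definition T :: "complex fps" where "T = 1 - 2 * fps_X * F 1"

lemma T_sq: "T * T = 1 - 4 * fps_X"
proof -
  have "T * T = 1 - 4 * fps_X * (F 1 - fps_X * F 1 ^ 2)"
    unfolding T_def power2_eq_square by algebra
  also have "F 1 - fps_X * F 1 ^ 2 = 1" using F1_eq by (metis add_diff_cancel_right')
  finally show ?thesis by simp
qed

lemma T_eq_S: "T = S"
proof -
  have "T * T = S * S" using T_sq S_sq by simp
  moreover have "(T - S) * (T + S) = T * T - S * S" by algebra
  ultimately have "(T - S) * (T + S) = 0" by simp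
  moreover have "(T + S) $ 0 \<noteq> 0" using S_0 by (simp add: T_def)
  then have "T + S \<noteq> 0" by (metis fps_zero_nth)
  ultimately show ?thesis by simp
qed

lemma XF1: "fps_X * F 1 = fps_const (1/2) * (1 - S)"
proof -
  have "S = 1 - 2 * fps_X * F 1" using T_eq_S unfolding T_def by simp
  then have "1 - S = 1 - (1 - 2 * fps_X * F 1)" by (rule arg_cong)
  also have "\<dots> = 2 * fps_X * F 1" by (simp only: diff_diff_eq2 add_diff_cancel_left')
  finally have "1 - S = 2 * fps_X * F 1" .
  then have "2 * (fps_X * F 1) = 1 - S" by (simp add: mult.assoc)
  then have "fps_const (1/2) * (2 * (fps_X * F 1)) = fps_const (1/2) * (1 - S)" by simp
  moreover have "fps_const (1/2) * (2 * (fps_X * F 1)) = fps_X * F 1"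
    by (simp add: numeral_fps_const mult.assoc[symmetric] fps_const_mult)
  ultimately show ?thesis by simp
qed

lemma F1_radius: "ereal (1/4) \<le> fps_conv_radius (F 1)"
proof -
  have "fps_conv_radius (fps_X * F 1) = fps_conv_radius (1 - S)"
    unfolding XF1 by (rule fps_conv_radius_cmult_left) simp
  also have "fps_conv_radius (1 - S) \<ge> fps_conv_radius S"
    using fps_conv_radius_diff[of 1 S] by simp
  finally have "fps_conv_radius (fps_X * F 1) \<ge> ereal (1/4)"
    using S_radius by simp
  moreover have "F 1 = fps_shift 1 (fps_X * F 1)" by (simp add: fps_eq_iff)
  ultimately show ?thesis by (metis fps_conv_radius_shift)
qed


lemma S_ode: "(1 - 4 * fps_X) * fps_deriv S = - 2 * S"
proof -
  have "fps_deriv (S * S) = fps_deriv (1 - 4 * fps_X :: complex fps)" using S_sq by simp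
  then have "2 * S * fps_deriv S = - 4"
    by (simp add: fps_deriv_mult algebra_simps numeral_fps_const)
  then have "S * (2 * S * fps_deriv S) = S * (- 4)" by simp
  then have "2 * ((S * S) * fps_deriv S) = - 4 * S" by (simp add: algebra_simps)
  then have "2 * ((1 - 4 * fps_X) * fps_deriv S) = 2 * (- 2 * S)" unfolding S_sq by (simp add: algebra_simps)
  moreover have "(2::complex fps) \<noteq> 0" by (simp add: numeral_fps_const)
  ultimately show ?thesis using mult_left_cancel by blast
qed

lemma S_rec: "of_nat (n + 1) * S $ (n + 1) = (4 * of_nat n - 2) * S $ n"
proof -
  have "((1 - 4 * fps_X) * fps_deriv S) $ n = (- 2 * S) $ n" using S_ode by simp
  moreover have "((1 - 4 * fps_X) * fps_deriv S) $ n = of_nat (n + 1) * S $ (n + 1) - 4 * (of_nat n * S $ n)"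
  proof -
    have "(fps_X * fps_deriv S) $ n = of_nat n * S $ n"
      by (cases n) (simp_all add: fps_X_mult_nth fps_deriv_nth)
    moreover have "((1 - 4 * fps_X) * fps_deriv S) = fps_deriv S - fps_const 4 * (fps_X * fps_deriv S)"
      by (simp add: algebra_simps numeral_fps_const)
    ultimately show ?thesis by (simp add: fps_deriv_nth)
  qed
  moreover have "(- 2 * S) $ n = - 2 * S $ n" by (simp add: numeral_fps_const)
  ultimately show ?thesis by (simp add: algebra_simps)
qed

lemma S_Suc: "S $ Suc n = - 2 * of_int (pcoef 1 n)"
proof -
  have "(fps_X * F 1) $ Suc n = of_int (pcoef 1 n)" by (simp add: fps_X_mult_nth)
  moreover have "(fps_X * F 1) $ Suc n = (fps_const (1/2) * (1 - S)) $ Suc n" by (simp only: XF1)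
  moreover have "(fps_const (1/2) * (1 - S)) $ Suc n = - S $ Suc n / 2" by simp
  ultimately show ?thesis by (simp add: field_simps)
qed

lemma p1_rec: "of_nat (n + 2) * of_int (pcoef 1 (n + 1)) = (4 * of_nat n + 2) * (of_int (pcoef 1 n) :: complex)"
proof -
  define p :: complex where "p = of_int (pcoef 1 n)"
  define q :: complex where "q = of_int (pcoef 1 (n + 1))"
  have "of_nat (Suc n + 1) * S $ (Suc n + 1) = (4 * of_nat (Suc n) - 2) * S $ Suc n"
    by (rule S_rec)
  then have "of_nat (n + 2) * (- 2 * q) = (4 * of_nat (n + 1) - 2) * (- 2 * p)"
    unfolding p_def q_def using S_Suc[of n] S_Suc[of "Suc n"] by simp
  then have "-2 * (of_nat (n + 2) * q) = -2 * ((4 * of_nat n + 2) * p)"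
    by (simp add: algebra_simps)
  then have "of_nat (n + 2) * q = (4 * of_nat n + 2) * p"
    using mult_left_cancel[of "-2 :: complex"] by simp
  then show ?thesis by (simp add: p_def q_def)
qed

lemma catalan_rec: "real (n + 2) * catalan (n + 1) = (4 * real n + 2) * catalan n"
proof -
  define X where "X = real ((2 * n + 2) choose (n + 1))"
  define A where "A = real ((2 * n + 1) choose n)"
  define B where "B = real ((2 * n) choose n)"
  have a: "Suc n * (Suc (2 * n + 1) choose Suc n) = Suc (2 * n + 1) * ((2 * n + 1) choose n)"
    by (rule Suc_times_binomial)
  have b: "Suc n * (Suc (2 * n) choose Suc n) = Suc (2 * n) * ((2 * n) choose n)"
    by (rule Suc_times_binomial)
  have c: "(2 * n + 1) choose n = (2 * n + 1) choose Suc n"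
    by (subst binomial_symmetric) auto
  have a': "real (Suc n) * X = real (2 * n + 2) * A"
    using arg_cong[OF a, of real] unfolding X_def A_def of_nat_mult by simp
  have b': "real (Suc n) * A = real (2 * n + 1) * B"
    using arg_cong[OF b, of real] c unfolding A_def B_def of_nat_mult by simp
  have "real (Suc n) * X = real (Suc n) * (2 * A)" using a' by (simp add: algebra_simps)
  then have X2: "X = 2 * A" by simp
  have cat1: "catalan (n + 1) = X / real (n + 2)" by (simp add: catalan_def X_def)
  have cat0: "catalan n = B / real (n + 1)" by (simp add: catalan_def B_def)
  have "real (n + 2) * catalan (n + 1) = X" unfolding cat1 by simp
  also have "\<dots> = 2 * A" by (rule X2)
  also have "\<dots> = (4 * real n + 2) * catalan n" unfolding cat0 using b' by (simp add: field_simps)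
  finally show ?thesis .
qed

lemma pcoef1_catalan: "(of_int (pcoef 1 n) :: complex) = complex_of_real (catalan n)"
proof (induction n)
  case 0 then show ?case by (simp add: pcoef_0 catalan_def)
next
  case (Suc n)
  have cr: "of_nat (n + 2) * complex_of_real (catalan (n + 1)) = (4 * of_nat n + 2) * complex_of_real (catalan n)"
    using arg_cong[OF catalan_rec[of n], of complex_of_real] by simp
  have "of_nat (n + 2) * (of_int (pcoef 1 (n + 1)) :: complex) = of_nat (n + 2) * complex_of_real (catalan (n + 1))"
    using p1_rec[of n] Suc cr by simp
  moreover have "of_nat (n + 2) \<noteq> (0::complex)" by (simp only: of_nat_eq_0_iff)
  ultimately have "(of_int (pcoef 1 (n + 1)) :: complex) = complex_of_real (catalan (n + 1))"
    using mult_left_cancel by blast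
  then show ?case by simp
qed

lemma pcoef1_catalan': "(of_int (pcoef (Suc 0) n) :: complex) = complex_of_real (catalan n)"
  using pcoef1_catalan[of n] by simp

lemma catalan_conv: "catalan (Suc n) = (\<Sum>j\<le>n. catalan j * catalan (n - j))"
proof -
  have "complex_of_real (catalan (Suc n)) = of_int (pcoef 1 (Suc n))" by (simp add: pcoef1_catalan pcoef1_catalan')
  also have "\<dots> = of_int (\<Sum>j\<le>n. pcoef 1 j * pcoef 1 (n - j))" using pcoef_Suc[of 1 n] by simp
  also have "\<dots> = complex_of_real (\<Sum>j\<le>n. catalan j * catalan (n - j))" by (simp add: pcoef1_catalan pcoef1_catalan')
  finally show ?thesis by (simp only: of_real_eq_iff)
qed


definition cc :: "nat \<Rightarrow> complex" where
  "cc i = complex_of_real (catalan (i - 2)) / 2 ^ (3 * i - 5)"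

lemma cc_rec: "i \<ge> 3 \<Longrightarrow> cc i = (\<Sum>a\<in>{2..<i}. cc a * cc (i + 1 - a)) / 4"
proof -
  assume "i \<ge> 3"
  then obtain k where k: "i = k + 3" by (metis add.commute le_Suc_ex)
  have tm: "cc (j + 2) * cc (k + 4 - (j + 2)) = complex_of_real (catalan j * catalan (k - j)) / 2 ^ (3 * k + 2)"
    if j: "j \<le> k" for j
  proof -
    have e1: "3 * (j + 2) - 5 = 3 * j + 1" by simp
    have e2: "3 * (k + 4 - (j + 2)) - 5 = 3 * (k - j) + 1" using j by simp
    have e3: "k + 4 - (j + 2) - 2 = k - j" using j by simp
    have e4: "(2::complex) ^ (3 * j + 1) * 2 ^ (3 * (k - j) + 1) = 2 ^ (3 * k + 2)"
      using j by (simp flip: power_add) (simp add: algebra_simps)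
    show ?thesis unfolding cc_def e1 e2 e3 using e4 by (simp add: field_simps)
  qed
  have "(\<Sum>a\<in>{2..<i}. cc a * cc (i + 1 - a)) = (\<Sum>j\<le>k. cc (j + 2) * cc (k + 4 - (j + 2)))"
    unfolding k by (rule sum.reindex_bij_witness[of _ "\<lambda>j. j + 2" "\<lambda>a. a - 2"]) (auto dest!: le_Suc_ex)
  also have "\<dots> = (\<Sum>j\<le>k. complex_of_real (catalan j * catalan (k - j)) / 2 ^ (3 * k + 2))"
    using tm by (intro sum.cong) auto
  also have "\<dots> = complex_of_real (catalan (Suc k)) / 2 ^ (3 * k + 2)"
    by (simp add: catalan_conv sum_divide_distrib)
  finally have sm: "(\<Sum>a\<in>{2..<i}. cc a * cc (i + 1 - a)) = complex_of_real (catalan (Suc k)) / 2 ^ (3 * k + 2)" .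
  have e5: "3 * (k + 3) - 5 = 3 * k + 4" "k + 3 - 2 = Suc k" by simp_all
  have "cc i = complex_of_real (catalan (Suc k)) / 2 ^ (3 * k + 4)" unfolding cc_def k e5 ..
  also have "(2::complex) ^ (3 * k + 4) = 2 ^ (3 * k + 2) * 4" by (simp add: power_add)
  also have "complex_of_real (catalan (Suc k)) / (2 ^ (3 * k + 2) * 4) = complex_of_real (catalan (Suc k)) / 2 ^ (3 * k + 2) / 4"
    by simp
  finally show ?thesis unfolding sm .
qed


abbreviation ok :: "complex fps \<Rightarrow> bool" where "ok f \<equiv> ereal (1/4) \<le> fps_conv_radius f"

lemma ok_add: "ok f \<Longrightarrow> ok g \<Longrightarrow> ok (f + g)"
  using fps_conv_radius_add[of f g] by (simp add: min_def split: if_splits)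

lemma ok_mult: "ok f \<Longrightarrow> ok g \<Longrightarrow> ok (f * g)"
  using fps_conv_radius_mult[of f g] by (simp add: min_def split: if_splits)

lemma ok_sum: "(\<And>x. x \<in> A \<Longrightarrow> ok (f x)) \<Longrightarrow> ok (sum f A)"
proof (induction A rule: infinite_finite_induct)
  case (insert x F) then show ?case by (simp add: ok_add)
qed simp_all

lemma ok_X_power: "ok (fps_X ^ k)" by simp
lemma ok_X: "ok fps_X" by simp
lemma ok_const: "ok (fps_const c)" by simp

lemma ok_deriv: "ok f \<Longrightarrow> ok ((fps_deriv ^^ r) f)"
proof (induction r)
  case (Suc r) then show ?case using fps_conv_radius_deriv[of "(fps_deriv ^^ r) f"] by simp
qed simp

lemma G_shift: "k \<ge> 2 \<Longrightarrow> G k = fps_shift (k - 2) (F k)"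
  by (rule fps_ext) (simp add: G_nth)

definition R :: "nat \<Rightarrow> complex fps" where
  "R i = fps_X ^ (i - 2) * Bsum i + fps_X * (\<Sum>a\<in>{2..<i}. F a * F (i + 1 - a))"

lemma sum_split:
  assumes "i \<ge> 2"
  shows "(\<Sum>a\<in>{1..i}. F a * F (i + 1 - a)) = 2 * F 1 * F i + (\<Sum>a\<in>{2..<i}. F a * F (i + 1 - a))"
proof -
  have "{1..i} = insert 1 (insert i {2..<i})" using assms by auto
  then have "(\<Sum>a\<in>{1..i}. F a * F (i + 1 - a)) = F 1 * F i + (F i * F 1 + (\<Sum>a\<in>{2..<i}. F a * F (i + 1 - a)))"
    using assms by simp
  moreover have "F 1 * F i + (F i * F 1 + (\<Sum>a\<in>{2..<i}. F a * F (i + 1 - a)))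
      = 2 * F 1 * F i + (\<Sum>a\<in>{2..<i}. F a * F (i + 1 - a))" by algebra
  ultimately show ?thesis by simp
qed

lemma F_T: "i \<ge> 2 \<Longrightarrow> F i * T = R i"
proof -
  assume i: "i \<ge> 2"
  have "F i = fps_X ^ (i - 2) * Bsum i + fps_X * (2 * F 1 * F i + (\<Sum>a\<in>{2..<i}. F a * F (i + 1 - a)))"
    using F_rec[OF i] sum_split[OF i] by simp
  also have "fps_X ^ (i - 2) * Bsum i + fps_X * (2 * F 1 * F i + (\<Sum>a\<in>{2..<i}. F a * F (i + 1 - a)))
     = R i + 2 * fps_X * F 1 * F i" unfolding R_def by algebra
  finally have h: "F i = R i + 2 * fps_X * F 1 * F i" .
  have "F i * T = F i - 2 * fps_X * F 1 * F i" unfolding T_def by algebra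
  also have "\<dots> = R i" by (subst (1) h) simp
  finally show ?thesis .
qed

lemma F0: "F 0 = 0" by (rule fps_ext) (simp add: pcoef_def)

lemma inverse_S_ok: "ok (inverse S)"
proof -
  have "fps_conv_radius (inverse S) \<ge> min (ereal (1/4)) (fps_conv_radius S)"
    by (rule fps_conv_radius_inverse) (use S_eval sq_nz in auto)
  then show ?thesis using S_radius by (simp add: min_def split: if_splits)
qed

lemma F_ok: "ok (F i)"
proof (induction i rule: less_induct)
  case (less i)
  show ?case
  proof (cases "i \<ge> 2")
    case False
    then have "i = 0 \<or> i = 1" by auto
    then show ?thesis using F0 F1_radius by auto
  next
    case True
    have G_ok: "ok (G k)" if "k \<in> {1..<i}" for k
    proof (cases "k = 1")
      case True show ?thesis unfolding True G1 by (rule ok_mult[OF ok_X F1_radius])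
    next
      case False then show ?thesis using that less G_shift[of k] by simp
    qed
    have "ok (Bsum i)" unfolding Bsum_def
      by (intro ok_sum ok_mult ok_const ok_deriv G_ok)
    moreover have "ok (\<Sum>a\<in>{2..<i}. F a * F (i + 1 - a))"
      by (intro ok_sum ok_mult less) auto
    ultimately have "ok (R i)" unfolding R_def by (intro ok_add ok_mult ok_X_power ok_X)
    have "F i = F i * (S * inverse S)" using S_0 by (simp add: inverse_mult_eq_1')
    also have "\<dots> = R i * inverse S" using F_T[OF True] T_eq_S by (simp add: mult.assoc[symmetric])
    finally show ?thesis using \<open>ok (R i)\<close> inverse_S_ok by (simp add: ok_mult)
  qed
qed

lemma G1_ok: "ok (G 1)"
  unfolding G1 by (rule ok_mult[OF ok_X F1_radius])

lemma G_ok: "k \<ge> 1 \<Longrightarrow> ok (G k)"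
proof (cases "k = 1")
  case True then show ?thesis using G1_ok by simp
qed (simp add: G_shift F_ok)


definition Wd :: "complex set" where "Wd = ball (1/4) (1/8)"
definition Vd :: "complex set" where "Vd = Wd \<inter> ball 0 (1/4)"

lemma open_Wd: "open Wd" by (simp add: Wd_def)
lemma open_Vd: "open Vd" by (simp add: Vd_def Wd_def open_Int)
lemma Vd_sub: "Vd \<subseteq> Wd" by (auto simp: Vd_def)
lemma quarter_in_Wd: "1/4 \<in> Wd" by (simp add: Wd_def)
lemma Vd_norm: "z \<in> Vd \<Longrightarrow> norm z < 1/4" by (simp add: Vd_def)
lemma Vd_sq_nz: "z \<in> Vd \<Longrightarrow> sq z \<noteq> 0" using sq_nz Vd_norm by blast

lemma Vd_nz: "z \<in> Vd \<Longrightarrow> z \<noteq> 0"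
  by (auto simp: Vd_def Wd_def)

lemma sq_deriv: "z \<in> Vd \<Longrightarrow> (sq has_field_derivative (-2 / sq z)) (at z)"
proof -
  assume z: "z \<in> Vd"
  have "((\<lambda>z. csqrt (1 - 4 * z)) has_field_derivative (- 4) / (2 * csqrt (1 - 4 * z))) (at z)"
    by (rule has_field_derivative_csqrt') (auto intro!: derivative_eq_intros notin_nonpos Vd_norm z)
  then show ?thesis unfolding sq_def by simp
qed

lemma sq_tendsto: "(sq \<longlongrightarrow> 0) (at (1/4) within Vd)"
proof -
  have "((\<lambda>z. sqrt (norm (1 - 4 * z))) \<longlongrightarrow> sqrt (norm (1 - 4 * (1/4::complex)))) (at (1/4) within Vd)"
    by (intro tendsto_intros)
  then have "((\<lambda>z. norm (sq z)) \<longlongrightarrow> 0) (at (1/4) within Vd)"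
    by (simp add: sq_def norm_csqrt)
  then show ?thesis by (simp add: tendsto_norm_zero_iff)
qed

inductive_set PS :: "(complex \<Rightarrow> complex) set" where
  hol: "h holomorphic_on Wd \<Longrightarrow> h \<in> PS"
| sqr: "sq \<in> PS"
| add: "p \<in> PS \<Longrightarrow> q \<in> PS \<Longrightarrow> (\<lambda>z. p z + q z) \<in> PS"
| mul: "p \<in> PS \<Longrightarrow> q \<in> PS \<Longrightarrow> (\<lambda>z. p z * q z) \<in> PS"

lemma PS_const: "(\<lambda>z. c) \<in> PS" by (rule PS.hol) simp

lemma PS_lim: "p \<in> PS \<Longrightarrow> \<exists>L. (p \<longlongrightarrow> L) (at (1/4) within Vd)"
proof (induction rule: PS.induct)
  case (hol h)
  have "continuous_on Wd h" using hol holomorphic_on_imp_continuous_on by blast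
  then have "isCont h (1/4)" using open_Wd quarter_in_Wd continuous_on_eq_continuous_at by blast
  then have "(h \<longlongrightarrow> h (1/4)) (at (1/4) within Vd)"
    using isCont_def tendsto_within_subset by blast
  then show ?case by blast
next
  case sqr then show ?case using sq_tendsto by blast
next
  case (add p q) then show ?case by (blast intro: tendsto_add)
next
  case (mul p q) then show ?case by (blast intro: tendsto_mult)
qed

lemma PS_deriv: "p \<in> PS \<Longrightarrow> \<exists>q\<in>PS. \<forall>z\<in>Vd. (p has_field_derivative q z / sq z) (at z)"
proof (induction rule: PS.induct)
  case (hol h)
  have hd: "deriv h holomorphic_on Wd" using hol open_Wd by (rule holomorphic_deriv)
  show ?case
  proof (rule bexI[of _ "\<lambda>z. deriv h z * sq z"], rule ballI)
    fix z assume z: "z \<in> Vd"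
    have "(h has_field_derivative deriv h z) (at z)"
      using Vd_sub z by (intro holomorphic_derivI[OF hol open_Wd]) auto
    then show "(h has_field_derivative deriv h z * sq z / sq z) (at z)"
      using Vd_sq_nz[OF z] by simp
  qed (use hd in \<open>intro PS.mul PS.hol PS.sqr\<close>)
next
  case sqr
  show ?case
  proof (rule bexI[of _ "\<lambda>_. -2"], rule ballI)
    fix z assume "z \<in> Vd" then show "(sq has_field_derivative -2 / sq z) (at z)" by (rule sq_deriv)
  qed (rule PS_const)
next
  case (add p q)
  then obtain p1 q1 where p1: "p1 \<in> PS" "\<forall>z\<in>Vd. (p has_field_derivative p1 z / sq z) (at z)"
    and q1: "q1 \<in> PS" "\<forall>z\<in>Vd. (q has_field_derivative q1 z / sq z) (at z)" by blast
  show ?case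
  proof (rule bexI[of _ "\<lambda>z. p1 z + q1 z"], rule ballI)
    fix z assume z: "z \<in> Vd"
    have "((\<lambda>z. p z + q z) has_field_derivative p1 z / sq z + q1 z / sq z) (at z)"
      using p1(2) q1(2) z by (intro DERIV_add) auto
    then show "((\<lambda>z. p z + q z) has_field_derivative (p1 z + q1 z) / sq z) (at z)"
      by (simp add: add_divide_distrib)
  qed (use p1 q1 in \<open>intro PS.add\<close>)
next
  case (mul p q)
  then obtain p1 q1 where p1: "p1 \<in> PS" "\<forall>z\<in>Vd. (p has_field_derivative p1 z / sq z) (at z)"
    and q1: "q1 \<in> PS" "\<forall>z\<in>Vd. (q has_field_derivative q1 z / sq z) (at z)" by blast
  show ?case
  proof (rule bexI[of _ "\<lambda>z. p z * q1 z + p1 z * q z"], rule ballI)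
    fix z assume z: "z \<in> Vd"
    have "((\<lambda>z. p z * q z) has_field_derivative p1 z / sq z * q z + q1 z / sq z * p z) (at z)"
      using p1(2) q1(2) z by (intro DERIV_mult) auto
    then show "((\<lambda>z. p z * q z) has_field_derivative (p z * q1 z + p1 z * q z) / sq z) (at z)"
      by (rule DERIV_cong) (simp add: add_divide_distrib algebra_simps)
  qed (use mul p1 q1 in \<open>intro PS.add PS.mul\<close>)
qed


definition Ord :: "(complex \<Rightarrow> complex) \<Rightarrow> nat \<Rightarrow> bool" where
  "Ord f k \<longleftrightarrow> (\<exists>q\<in>PS. \<forall>z\<in>Vd. f z = q z / sq z ^ k)"

definition Lead :: "(complex \<Rightarrow> complex) \<Rightarrow> nat \<Rightarrow> complex \<Rightarrow> bool" where
  "Lead f k c \<longleftrightarrow> (\<exists>q\<in>PS. (\<forall>z\<in>Vd. f z = q z / sq z ^ k) \<and> (q \<longlongrightarrow> c) (at (1/4) within Vd))"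

lemma Lead_Ord: "Lead f k c \<Longrightarrow> Ord f k"
  unfolding Lead_def Ord_def by blast

lemma Ord_Lead: "Ord f k \<Longrightarrow> Lead f (Suc k) 0"
proof -
  assume "Ord f k"
  then obtain q where q: "q \<in> PS" "\<forall>z\<in>Vd. f z = q z / sq z ^ k" by (auto simp: Ord_def)
  obtain L where L: "(q \<longlongrightarrow> L) (at (1/4) within Vd)" using PS_lim[OF q(1)] by blast
  have 1: "(\<lambda>z. q z * sq z) \<in> PS" using q(1) by (intro PS.mul PS.sqr)
  have 2: "\<forall>z\<in>Vd. f z = q z * sq z / sq z ^ Suc k"
    using q(2) Vd_sq_nz by simp
  have 3: "((\<lambda>z. q z * sq z) \<longlongrightarrow> L * 0) (at (1/4) within Vd)"
    by (intro tendsto_mult L sq_tendsto)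
  show ?thesis unfolding Lead_def using 1 2 3 by (intro bexI[of _ "\<lambda>z. q z * sq z"] conjI) auto
qed

lemma Ord_mono: "Ord f k \<Longrightarrow> k \<le> m \<Longrightarrow> Ord f m"
proof -
  assume "Ord f k" "k \<le> m"
  then obtain q where q: "q \<in> PS" "\<forall>z\<in>Vd. f z = q z / sq z ^ k" by (auto simp: Ord_def)
  have "(\<lambda>z. q z * sq z ^ (m - k)) \<in> PS"
  proof -
    have "(\<lambda>z. sq z ^ n) \<in> PS" for n
      by (induction n) (auto intro: PS_const PS.mul[OF PS.sqr, simplified])
    then show ?thesis using q(1) by (intro PS.mul)
  qed
  moreover have "\<forall>z\<in>Vd. f z = q z * sq z ^ (m - k) / sq z ^ m"
    using q(2) Vd_sq_nz \<open>k \<le> m\<close> by (simp add: power_diff)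
  ultimately show ?thesis unfolding Ord_def by (intro bexI[of _ "\<lambda>z. q z * sq z ^ (m - k)"]) auto
qed

lemma Lead_cong: "Lead f k c \<Longrightarrow> (\<And>z. z \<in> Vd \<Longrightarrow> f z = g z) \<Longrightarrow> Lead g k c"
  unfolding Lead_def by auto

lemma Ord_cong: "Ord f k \<Longrightarrow> (\<And>z. z \<in> Vd \<Longrightarrow> f z = g z) \<Longrightarrow> Ord g k"
  unfolding Ord_def by auto

lemma Lead_zero: "Lead (\<lambda>z. 0) k 0"
  unfolding Lead_def by (intro bexI[of _ "\<lambda>_. 0"] conjI) (auto intro: PS_const)

lemma Lead_add: "Lead f k a \<Longrightarrow> Lead g k b \<Longrightarrow> Lead (\<lambda>z. f z + g z) k (a + b)"
  unfolding Lead_def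
  by (elim bexE conjE, rule_tac x="\<lambda>z. qa z + q z" in bexI) (auto intro: tendsto_add PS.add simp: add_divide_distrib add.commute)

lemma Lead_mult: "Lead f j a \<Longrightarrow> Lead g k b \<Longrightarrow> Lead (\<lambda>z. f z * g z) (j + k) (a * b)"
  unfolding Lead_def
  by (elim bexE conjE, rule_tac x="\<lambda>z. qa z * q z" in bexI) (auto intro: tendsto_mult PS.mul simp: power_add mult.commute)

lemma Lead_hmult: "h holomorphic_on Wd \<Longrightarrow> Lead f k a \<Longrightarrow> Lead (\<lambda>z. h z * f z) k (h (1/4) * a)"
proof -
  assume h: "h holomorphic_on Wd" and "Lead f k a"
  have "Lead h 0 (h (1/4))"
  proof -
    have "continuous_on Wd h" using h holomorphic_on_imp_continuous_on by blast
    then have "isCont h (1/4)" using open_Wd quarter_in_Wd continuous_on_eq_continuous_at by blast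
    then have "(h \<longlongrightarrow> h (1/4)) (at (1/4) within Vd)"
      using isCont_def tendsto_within_subset by blast
    then show ?thesis unfolding Lead_def using h by (intro bexI[of _ h]) (auto intro: PS.hol)
  qed
  from Lead_mult[OF this \<open>Lead f k a\<close>] show ?thesis by simp
qed

lemma Ord_hmult: "h holomorphic_on Wd \<Longrightarrow> Ord f k \<Longrightarrow> Ord (\<lambda>z. h z * f z) k"
  unfolding Ord_def
  by (elim bexE, rule_tac x="\<lambda>z. h z * q z" in bexI) (auto intro: PS.hol PS.mul)

lemma Lead_sum: "finite A \<Longrightarrow> (\<And>x. x \<in> A \<Longrightarrow> Lead (f x) k (c x)) \<Longrightarrow> Lead (\<lambda>z. \<Sum>x\<in>A. f x z) k (\<Sum>x\<in>A. c x)"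
proof (induction A rule: finite_induct)
  case empty then show ?case using Lead_zero by simp
next
  case (insert x A)
  then show ?case using Lead_add[of "f x" k "c x" "\<lambda>z. \<Sum>x\<in>A. f x z" "\<Sum>x\<in>A. c x"] by simp
qed

lemma Lead_div_sq: "Lead g k c \<Longrightarrow> (\<And>z. z \<in> Vd \<Longrightarrow> sq z * f z = g z) \<Longrightarrow> Lead f (Suc k) c"
  unfolding Lead_def
proof (elim bexE conjE, intro bexI conjI)
  fix q assume q: "q \<in> PS" "\<forall>z\<in>Vd. g z = q z / sq z ^ k" "(q \<longlongrightarrow> c) (at (1/4) within Vd)"
    and fg: "\<And>z. z \<in> Vd \<Longrightarrow> sq z * f z = g z"
  show "\<forall>z\<in>Vd. f z = q z / sq z ^ Suc k"
  proof
    fix z assume z: "z \<in> Vd"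
    then have "sq z * f z = q z / sq z ^ k" using q(2) fg by simp
    then show "f z = q z / sq z ^ Suc k" using Vd_sq_nz[OF z] by (simp add: field_simps)
  qed
qed auto

lemma Lead_tendsto: "Lead f k c \<Longrightarrow> ((\<lambda>z. f z * sq z ^ k) \<longlongrightarrow> c) (at (1/4) within Vd)"
proof -
  assume "Lead f k c"
  then obtain q where q: "q \<in> PS" "\<forall>z\<in>Vd. f z = q z / sq z ^ k" "(q \<longlongrightarrow> c) (at (1/4) within Vd)"
    by (auto simp: Lead_def)
  have "eventually (\<lambda>z. q z = f z * sq z ^ k) (at (1/4) within Vd)"
    unfolding eventually_at_filter using q(2) Vd_sq_nz by (auto intro!: always_eventually)
  from tendsto_cong[OF this] q(3) show ?thesis by simp
qed


lemma deriv_rep: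
  assumes q: "q \<in> PS" and f: "\<And>z. z \<in> Vd \<Longrightarrow> f z = q z / sq z ^ k"
  shows "\<exists>q1\<in>PS. \<forall>z\<in>Vd. deriv f z = (q1 z * sq z + 2 * of_nat k * q z) / sq z ^ (k + 2)"
proof -
  obtain q1 where q1: "q1 \<in> PS" "\<forall>z\<in>Vd. (q has_field_derivative q1 z / sq z) (at z)"
    using PS_deriv[OF q] by blast
  have "\<forall>z\<in>Vd. deriv f z = (q1 z * sq z + 2 * of_nat k * q z) / sq z ^ (k + 2)"
  proof
    fix z assume z: "z \<in> Vd"
    have nz: "sq z \<noteq> 0" using Vd_sq_nz[OF z] .
    have d1: "((\<lambda>w. sq w ^ k) has_field_derivative of_nat k * ((-2 / sq z) * sq z ^ (k - Suc 0))) (at z)"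
      using sq_deriv[OF z] by (rule DERIV_power)
    have d2: "((\<lambda>w. q w / sq w ^ k) has_field_derivative
        (q1 z / sq z * sq z ^ k - q z * (of_nat k * ((-2 / sq z) * sq z ^ (k - Suc 0)))) / (sq z ^ k * sq z ^ k)) (at z)"
      using q1(2) z d1 nz by (intro DERIV_divide) auto
    have e: "(q1 z / sq z * sq z ^ k - q z * (of_nat k * ((-2 / sq z) * sq z ^ (k - Suc 0)))) / (sq z ^ k * sq z ^ k)
        = (q1 z * sq z + 2 * of_nat k * q z) / sq z ^ (k + 2)"
    proof (cases k)
      case 0 then show ?thesis using nz by (simp add: field_simps power2_eq_square)
    next
      case (Suc m) then show ?thesis using nz by (simp add: field_simps power2_eq_square)
    qed
    have "(f has_field_derivative (q1 z * sq z + 2 * of_nat k * q z) / sq z ^ (k + 2)) (at z)"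
      using d2 unfolding e by (rule has_field_derivative_transform_within_open[OF _ open_Vd z]) (simp add: f)
    then show "deriv f z = (q1 z * sq z + 2 * of_nat k * q z) / sq z ^ (k + 2)"
      by (rule DERIV_imp_deriv)
  qed
  then show ?thesis using q1(1) by blast
qed

lemma Ord_deriv:
  assumes "Ord f k" "\<And>z. z \<in> Vd \<Longrightarrow> g z = deriv f z"
  shows "Ord g (k + 2)"
proof -
  obtain q where q: "q \<in> PS" "\<forall>z\<in>Vd. f z = q z / sq z ^ k" using assms(1) by (auto simp: Ord_def)
  obtain q1 where q1: "q1 \<in> PS" "\<forall>z\<in>Vd. deriv f z = (q1 z * sq z + 2 * of_nat k * q z) / sq z ^ (k + 2)"
    using deriv_rep[OF q(1)] q(2) by blast
  have "(\<lambda>z. q1 z * sq z + 2 * of_nat k * q z) \<in> PS"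
    using q(1) q1(1) by (intro PS.add PS.mul PS.sqr PS_const)
  then show ?thesis unfolding Ord_def using q1(2) assms(2)
    by (intro bexI[of _ "\<lambda>z. q1 z * sq z + 2 * of_nat k * q z"]) auto
qed

lemma Ord_deriv0:
  assumes "Ord f 0" "\<And>z. z \<in> Vd \<Longrightarrow> g z = deriv f z"
  shows "Ord g 1"
proof -
  obtain q where q: "q \<in> PS" "\<forall>z\<in>Vd. f z = q z / sq z ^ 0" using assms(1) by (auto simp: Ord_def)
  obtain q1 where q1: "q1 \<in> PS" "\<forall>z\<in>Vd. deriv f z = (q1 z * sq z + 2 * of_nat 0 * q z) / sq z ^ (0 + 2)"
    using deriv_rep[OF q(1), of f 0] q(2) by blast
  have "\<forall>z\<in>Vd. g z = q1 z / sq z ^ 1"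
    using q1(2) assms(2) Vd_sq_nz by (simp add: power2_eq_square)
  then show ?thesis unfolding Ord_def using q1(1) by blast
qed


abbreviation f :: "nat \<Rightarrow> complex \<Rightarrow> complex" where "f i \<equiv> eval_fps (F i)"
abbreviation gr :: "nat \<Rightarrow> nat \<Rightarrow> complex \<Rightarrow> complex" where "gr k r \<equiv> eval_fps ((fps_deriv ^^ r) (G k))"

lemma okz: "ok h \<Longrightarrow> norm (z::complex) < 1/4 \<Longrightarrow> norm z < fps_conv_radius h"
  by (rule ok_radius)

lemma eval_sum: "(\<And>x. x \<in> A \<Longrightarrow> ok (h x)) \<Longrightarrow> norm z < 1/4 \<Longrightarrow> eval_fps (sum h A) z = (\<Sum>x\<in>A. eval_fps (h x) z)"
proof (induction A rule: infinite_finite_induct)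
  case (insert x A)
  then show ?case by (simp add: eval_fps_add okz ok_sum)
qed simp_all

lemma eval_mult: "ok a \<Longrightarrow> ok b \<Longrightarrow> norm z < 1/4 \<Longrightarrow> eval_fps (a * b) z = eval_fps a z * eval_fps b z"
  by (intro eval_fps_mult okz)

lemma eval_add: "ok a \<Longrightarrow> ok b \<Longrightarrow> norm z < 1/4 \<Longrightarrow> eval_fps (a + b) z = eval_fps a z + eval_fps b z"
  by (intro eval_fps_add okz)

lemma one_minus: "norm z < 1/4 \<Longrightarrow> 1 - 2 * z * f 1 z = sq z"
proof -
  assume z: "norm z < 1/4"
  have "eval_fps T z = eval_fps S z" by (simp add: T_eq_S)
  also have "\<dots> = sq z" using S_eval z by simp
  also have "eval_fps T z = 1 - 2 * z * f 1 z"
    unfolding T_def using z F1_radius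
    by (simp add: eval_fps_diff eval_mult ok_mult okz ok_X numeral_fps_const)
  finally show ?thesis .
qed

lemma main_eq:
  assumes i: "i \<ge> 2" and z: "norm z < 1/4"
  shows "sq z * f i z = z ^ (i - 2) * (\<Sum>k\<in>{1..<i}. (1 / fact (i - 1 - k)) * gr k (i - 1 - k) z)
            + z * (\<Sum>a\<in>{2..<i}. f a z * f (i + 1 - a) z)"
proof -
  have "eval_fps (F i * T) z = eval_fps (R i) z" by (simp add: F_T[OF i])
  moreover have "eval_fps (F i * T) z = f i z * sq z"
    using z F_ok by (simp add: T_eq_S eval_mult S_radius S_eval)
  moreover have "eval_fps (R i) z = z ^ (i - 2) * (\<Sum>k\<in>{1..<i}. (1 / fact (i - 1 - k)) * gr k (i - 1 - k) z)
            + z * (\<Sum>a\<in>{2..<i}. f a z * f (i + 1 - a) z)"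
  proof -
    have okB: "ok (fps_const (1 / fact (i - 1 - k)) * (fps_deriv ^^ (i - 1 - k)) (G k))" if "k \<in> {1..<i}" for k
      using that by (intro ok_mult ok_const ok_deriv G_ok) auto
    have eB: "eval_fps (Bsum i) z = (\<Sum>k\<in>{1..<i}. (1 / fact (i - 1 - k)) * gr k (i - 1 - k) z)"
      unfolding Bsum_def using z okB
      by (subst eval_sum) (auto intro!: sum.cong simp: eval_mult ok_deriv G_ok)
    have okP: "ok (F a * F (i + 1 - a))" for a by (intro ok_mult F_ok)
    have eP: "eval_fps (\<Sum>a\<in>{2..<i}. F a * F (i + 1 - a)) z = (\<Sum>a\<in>{2..<i}. f a z * f (i + 1 - a) z)"
      using z okP by (subst eval_sum) (auto simp: eval_mult F_ok)
    have okBs: "ok (Bsum i)" unfolding Bsum_def using okB by (intro ok_sum) auto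
    have okPs: "ok (\<Sum>a\<in>{2..<i}. F a * F (i + 1 - a))" using okP by (intro ok_sum)
    show ?thesis unfolding R_def using z okBs okPs eB eP
      by (simp add: eval_add eval_mult ok_mult ok_X_power ok_X)
  qed
  ultimately show ?thesis by (simp add: mult.commute)
qed


lemma cc2: "cc 2 = 1/2" by (simp add: cc_def catalan_def)

lemma gr0: "gr k 0 = eval_fps (G k)" by simp

lemma gr_Suc: "z \<in> Vd \<Longrightarrow> k \<ge> 1 \<Longrightarrow> gr k (Suc r) z = deriv (gr k r) z"
proof -
  assume z: "z \<in> Vd" and k: "k \<ge> 1"
  have "gr k (Suc r) z = eval_fps (fps_deriv ((fps_deriv ^^ r) (G k))) z" by simp
  also have "\<dots> = deriv (gr k r) z"
    by (rule eval_fps_deriv, rule okz[OF ok_deriv[OF G_ok[OF k]] Vd_norm[OF z]])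
  finally show ?thesis .
qed

lemma gr_Ord: "k \<ge> 1 \<Longrightarrow> Ord (gr k 0) p \<Longrightarrow> Ord (gr k r) (p + 2 * r)"
proof (induction r)
  case (Suc r)
  then have "Ord (gr k r) (p + 2 * r)" by simp
  then have "Ord (gr k (Suc r)) (p + 2 * r + 2)"
    by (rule Ord_deriv) (use gr_Suc Suc.prems in auto)
  then show ?case by simp
qed simp

lemma gr_Ord0: "k \<ge> 1 \<Longrightarrow> Ord (gr k 0) 0 \<Longrightarrow> r \<ge> 1 \<Longrightarrow> Ord (gr k r) (2 * r - 1)"
proof (induction r)
  case (Suc r)
  show ?case
  proof (cases "r = 0")
    case True
    have "Ord (gr k (Suc 0)) 1"
      by (rule Ord_deriv0[OF Suc.prems(2)]) (use gr_Suc[of _ k 0] Suc.prems in auto)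
    then show ?thesis using True by simp
  next
    case False
    then have "Ord (gr k r) (2 * r - 1)" using Suc by simp
    then have "Ord (gr k (Suc r)) (2 * r - 1 + 2)"
      by (rule Ord_deriv) (use gr_Suc Suc.prems in auto)
    then show ?thesis using False by (simp add: algebra_simps)
  qed
qed simp

lemma g1_eq: "z \<in> Vd \<Longrightarrow> gr 1 0 z = (1 - sq z) / 2"
proof -
  assume z: "z \<in> Vd"
  have "gr 1 0 z = eval_fps (G 1) z" by simp
  also have "\<dots> = eval_fps (fps_X * F 1) z" by (simp only: G1)
  also have "\<dots> = z * f 1 z" using F1_radius Vd_norm[OF z] by (simp add: eval_mult ok_X)
  also have "\<dots> = (1 - sq z) / 2" using one_minus[OF Vd_norm[OF z]] by (simp add: field_simps)
  finally show ?thesis .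
qed

lemma PS_g1: "(\<lambda>z. (1 - sq z) / 2) \<in> PS"
proof -
  have "(\<lambda>z. (1/2) + (-1/2) * sq z) \<in> PS" by (intro PS.add PS.mul PS_const PS.sqr)
  moreover have "(\<lambda>z. (1/2) + (-1/2) * sq z) = (\<lambda>z. (1 - sq z) / 2)" by (auto simp: field_simps)
  ultimately show ?thesis by simp
qed

lemma Ord_g1: "Ord (gr 1 0) 0"
  unfolding Ord_def using PS_g1 g1_eq by (intro bexI[of _ "\<lambda>z. (1 - sq z) / 2"]) auto

lemma Lead_f2: "Lead (f 2) 1 (1/2)"
proof -
  have "Lead (\<lambda>z. (1 - sq z) / 2) 0 (1/2)"
    unfolding Lead_def using PS_g1
    by (intro bexI[of _ "\<lambda>z. (1 - sq z) / 2"] conjI) (auto intro!: tendsto_eq_intros sq_tendsto)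
  moreover have e: "sq z * f 2 z = (1 - sq z) / 2" if z: "z \<in> Vd" for z
  proof -
    have "{1..<2::nat} = {1}" by auto
    then have "sq z * f 2 z = gr 1 0 z" using main_eq[of 2 z] Vd_norm[OF z] by simp
    then show ?thesis using g1_eq[OF z] by simp
  qed
  ultimately have "Lead (f 2) (Suc 0) (1/2)"
    by (rule Lead_div_sq)
  then show ?thesis by simp
qed


lemma Lead_idx: "Lead h k c \<Longrightarrow> k = m \<Longrightarrow> Lead h m c" by simp
lemma Ord_idx: "Ord h k \<Longrightarrow> k = m \<Longrightarrow> Ord h m" by simp
lemma Lead_ceq: "Lead h k c \<Longrightarrow> c = d \<Longrightarrow> Lead h k d" by simp

lemma holo_pow_inv: "(\<lambda>z. 1 / z ^ n) holomorphic_on Wd"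
  by (intro holomorphic_intros) (auto simp: Wd_def dist_norm)

lemma Lead_f: "i \<ge> 2 \<Longrightarrow> Lead (f i) (2 * i - 3) (cc i)"
proof (induction i rule: less_induct)
  case (less i)
  show ?case
  proof (cases "i = 2")
    case True then show ?thesis unfolding True cc2 using Lead_f2 by simp
  next
    case False
    with less.prems have i3: "i \<ge> 3" by simp
    have Ogr: "Ord (gr k (i - 1 - k)) (2 * i - 5)" if k: "k \<in> {1..<i}" for k
    proof (cases "k = 1")
      case True
      have "Ord (gr 1 (i - 1 - 1)) (2 * (i - 1 - 1) - 1)"
        using i3 by (intro gr_Ord0 Ord_g1) auto
      moreover have "2 * (i - 1 - 1) - 1 = 2 * i - 5" using i3 by auto
      ultimately show ?thesis unfolding True by (rule Ord_idx)
    next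
      case False
      with k have k2: "k \<ge> 2" "k < i" by auto
      have "Lead (f k) (2 * k - 3) (cc k)" using less.IH k2 by auto
      then have "Ord (\<lambda>z. 1 / z ^ (k - 2) * f k z) (2 * k - 3)"
        by (intro Ord_hmult holo_pow_inv Lead_Ord)
      moreover have "1 / z ^ (k - 2) * f k z = gr k 0 z" if z: "z \<in> Vd" for z
      proof -
        have "f k z = eval_fps (fps_X ^ (k - 2) * G k) z" using F_G[OF k2(1)] by simp
        also have "\<dots> = z ^ (k - 2) * eval_fps (G k) z"
          using Vd_norm[OF z] G_ok k2 by (simp add: eval_mult)
        finally show ?thesis using Vd_nz[OF z] by simp
      qed
      ultimately have "Ord (gr k 0) (2 * k - 3)" by (rule Ord_cong)
      then have "Ord (gr k (i - 1 - k)) (2 * k - 3 + 2 * (i - 1 - k))"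
        using k2 by (intro gr_Ord) auto
      moreover have "2 * k - 3 + 2 * (i - 1 - k) = 2 * i - 5" using k2 by auto
      ultimately show ?thesis by (rule Ord_idx)
    qed
    have L1: "Lead (\<lambda>z. \<Sum>k\<in>{1..<i}. z ^ (i - 2) * ((1 / fact (i - 1 - k)) * gr k (i - 1 - k) z)) (2 * i - 4) (\<Sum>k\<in>{1..<i}. 0)"
    proof (rule Lead_sum)
      fix k assume k: "k \<in> {1..<i}"
      have "Ord (\<lambda>z. (z ^ (i - 2) * (1 / fact (i - 1 - k))) * gr k (i - 1 - k) z) (2 * i - 5)"
        by (intro Ord_hmult Ogr k) (intro holomorphic_intros)
      then have "Lead (\<lambda>z. (z ^ (i - 2) * (1 / fact (i - 1 - k))) * gr k (i - 1 - k) z) (Suc (2 * i - 5)) 0"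
        by (rule Ord_Lead)
      moreover have "Suc (2 * i - 5) = 2 * i - 4" using i3 by simp
      ultimately have "Lead (\<lambda>z. (z ^ (i - 2) * (1 / fact (i - 1 - k))) * gr k (i - 1 - k) z) (2 * i - 4) 0"
        by (rule Lead_idx)
      then show "Lead (\<lambda>z. z ^ (i - 2) * ((1 / fact (i - 1 - k)) * gr k (i - 1 - k) z)) (2 * i - 4) 0"
        by (rule Lead_cong) (simp add: mult.assoc)
    qed simp
    have L2: "Lead (\<lambda>z. \<Sum>a\<in>{2..<i}. f a z * f (i + 1 - a) z) (2 * i - 4) (\<Sum>a\<in>{2..<i}. cc a * cc (i + 1 - a))"
    proof (rule Lead_sum)
      fix a assume a: "a \<in> {2..<i}"
      have "Lead (f a) (2 * a - 3) (cc a)" "Lead (f (i + 1 - a)) (2 * (i + 1 - a) - 3) (cc (i + 1 - a))"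
        using less.IH a by auto
      from Lead_mult[OF this] have "Lead (\<lambda>z. f a z * f (i + 1 - a) z) ((2 * a - 3) + (2 * (i + 1 - a) - 3)) (cc a * cc (i + 1 - a))" .
      moreover have "(2 * a - 3) + (2 * (i + 1 - a) - 3) = 2 * i - 4" using a by auto
      ultimately show "Lead (\<lambda>z. f a z * f (i + 1 - a) z) (2 * i - 4) (cc a * cc (i + 1 - a))" by (rule Lead_idx)
    qed simp
    have L2': "Lead (\<lambda>z. z * (\<Sum>a\<in>{2..<i}. f a z * f (i + 1 - a) z)) (2 * i - 4) ((1/4) * (\<Sum>a\<in>{2..<i}. cc a * cc (i + 1 - a)))"
      using Lead_hmult[OF _ L2, of "\<lambda>z. z"] by simp
    have L1': "Lead (\<lambda>z. \<Sum>k\<in>{1..<i}. z ^ (i - 2) * ((1 / fact (i - 1 - k)) * gr k (i - 1 - k) z)) (2 * i - 4) 0"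
      using L1 by (rule Lead_ceq) simp
    have L: "Lead (\<lambda>z. sq z * f i z) (2 * i - 4) (0 + (1/4) * (\<Sum>a\<in>{2..<i}. cc a * cc (i + 1 - a)))"
      using Lead_add[OF L1' L2']
    proof (rule Lead_cong)
      fix z assume z: "z \<in> Vd"
      show "(\<Sum>k\<in>{1..<i}. z ^ (i - 2) * ((1 / fact (i - 1 - k)) * gr k (i - 1 - k) z)) + z * (\<Sum>a\<in>{2..<i}. f a z * f (i + 1 - a) z)
          = sq z * f i z"
        using main_eq[of i z] i3 Vd_norm[OF z] by (simp add: sum_distrib_left)
    qed
    have 1: "Lead (f i) (Suc (2 * i - 4)) (0 + (1/4) * (\<Sum>a\<in>{2..<i}. cc a * cc (i + 1 - a)))"
      by (rule Lead_div_sq[OF L]) (rule refl)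
    have 2: "Suc (2 * i - 4) = 2 * i - 3" using i3 by simp
    have 3: "0 + (1/4) * (\<Sum>a\<in>{2..<i}. cc a * cc (i + 1 - a)) = cc i"
      unfolding cc_rec[OF i3] by simp
    show ?thesis by (rule Lead_ceq[OF Lead_idx[OF 1 2] 3])
  qed
qed


lemma powr_sq:
  assumes z: "z \<in> Vd" and i: "i \<ge> 2"
  shows "(1 - 4 * z) powr (complex_of_real ((2 * real i - 3) / 2)) = sq z ^ (2 * i - 3)"
proof -
  have nz: "1 - 4 * z \<noteq> 0" using Vd_sq_nz[OF z] by (auto simp: sq_def)
  have e: "complex_of_real ((2 * real i - 3) / 2) = of_nat (2 * i - 3) / 2"
    using i by (simp add: of_nat_diff)
  have "(1 - 4 * z) powr (complex_of_real ((2 * real i - 3) / 2)) = exp (of_nat (2 * i - 3) * (Ln (1 - 4 * z) / 2))"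
    using nz unfolding powr_def e by (simp add: field_simps)
  also have "\<dots> = exp (Ln (1 - 4 * z) / 2) ^ (2 * i - 3)" by (rule exp_of_nat_mult)
  also have "exp (Ln (1 - 4 * z) / 2) = sq z" using nz by (simp add: sq_def csqrt_exp_Ln)
  finally show ?thesis .
qed

lemma catalan_pos: "catalan k > 0" by (simp add: catalan_def)

theorem proposition2:
  fixes i :: nat
  assumes "i \<ge> 2"
  shows "((\<lambda>z. agen i z /
            (complex_of_real (catalan (i - 2)) /
              (2 ^ (3 * i - 5) * (1 - 4 * z) powr (of_real ((2 * real i - 3) / 2)))))
          \<longlongrightarrow> 1) (at (1/4) within ball 0 (1/4))"
proof -
  define C where "C = complex_of_real (catalan (i - 2))"
  have Cnz: "C \<noteq> 0" using catalan_pos[of "i - 2"] by (simp add: C_def)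
  have lim: "((\<lambda>z. f i z * sq z ^ (2 * i - 3)) \<longlongrightarrow> cc i) (at (1/4) within Vd)"
    using Lead_tendsto[OF Lead_f[OF assms]] .
  then have lim2: "((\<lambda>z. (f i z * sq z ^ (2 * i - 3)) * (2 ^ (3 * i - 5) / C)) \<longlongrightarrow> cc i * (2 ^ (3 * i - 5) / C)) (at (1/4) within Vd)"
    by (intro tendsto_mult tendsto_const)
  have one: "cc i * (2 ^ (3 * i - 5) / C) = 1"
    using Cnz by (simp add: cc_def C_def)
  have ev: "eventually (\<lambda>z. (f i z * sq z ^ (2 * i - 3)) * (2 ^ (3 * i - 5) / C) =
       agen i z / (C / (2 ^ (3 * i - 5) * (1 - 4 * z) powr (of_real ((2 * real i - 3) / 2))))) (at (1/4) within Vd)"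
    unfolding eventually_at_filter
  proof (intro always_eventually allI impI)
    fix z assume z: "z \<in> Vd"
    show "(f i z * sq z ^ (2 * i - 3)) * (2 ^ (3 * i - 5) / C) =
       agen i z / (C / (2 ^ (3 * i - 5) * (1 - 4 * z) powr (of_real ((2 * real i - 3) / 2))))"
      unfolding powr_sq[OF z assms] agen_eval using Cnz Vd_sq_nz[OF z] by (simp add: field_simps)
  qed
  have "((\<lambda>z. agen i z / (C / (2 ^ (3 * i - 5) * (1 - 4 * z) powr (of_real ((2 * real i - 3) / 2))))) \<longlongrightarrow> 1) (at (1/4) within Vd)"
    using tendsto_cong[OF ev] lim2 one by simp
  moreover have "at (1/4) within ball 0 (1/4) = at (1/4) within Vd"
    by (rule at_within_nhd[OF quarter_in_Wd open_Wd]) (auto simp: Vd_def)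
  ultimately show ?thesis by (simp add: C_def)
qed

end
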